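(* Let $R=\bigoplus_{s\in S}R_s$ be an $S$-graded ring inducing $S$ with $S$ cancellative. If $R$ is graded von Neumann regular, then the ring $R_e$ is von Neumann regular for every idempotent $e\in S$.
   Context: Rings are associative, not necessarily unital. $S$-graded ring inducing $S$: $S$ a partial groupoid, $R=\bigoplus_{s\in S}R_s$ with additive subgroups $R_s$, $R_sR_t\subseteq R_{st}$ when $st$ is defined, and $R_sR_t\neq0$ implies $st$ is defined. Convention: $0\in S$, $R_0=0$, $S\setminus\{0\}=\{s:R_s\ne0\}$, undefined products in $S$ set to $0$, $0$ absorbing. Homogeneous elements: $H_R=\bigcup_s R_s$. $S$ is cancellative if $0\ne su=tu$ or $0\ne us=ut$ implies $s=t$. $R$ is graded von Neumann regular if $x\in xRx$ for all $x\in H_R$. For an idempotent $e$ of $S$, $R_e$ is a subring. *)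

theory Defs
  imports Main
begin

text \<open>The paper's adjoined absorbing
  zero is not part of the carrier: "st = 0" in the paper means "m s t = None" here.
  Rings are modelled by the type class ring (associative, not necessarily unital).\<close>

definition partial_groupoid :: "'s set \<Rightarrow> ('s \<Rightarrow> 's \<Rightarrow> 's option) \<Rightarrow> bool" where
  "partial_groupoid S m \<longleftrightarrow> (\<forall>s\<in>S. \<forall>t\<in>S. \<forall>u. m s t = Some u \<longrightarrow> u \<in> S)"

definition additive_subgroup :: "'r::ring set \<Rightarrow> bool" where
  "additive_subgroup A \<longleftrightarrow> 0 \<in> A \<and> (\<forall>a\<in>A. \<forall>b\<in>A. a + b \<in> A) \<and> (\<forall>a\<in>A. - a \<in> A)"

definition graded_ring_inducing ::
  "'s set \<Rightarrow> ('s \<Rightarrow> 's \<Rightarrow> 's option) \<Rightarrow> ('s \<Rightarrow> 'r::ring set) \<Rightarrow> bool" where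
  "graded_ring_inducing S m Rg \<longleftrightarrow>
     partial_groupoid S m \<and>
     (\<forall>s\<in>S. additive_subgroup (Rg s)) \<and>
     (\<forall>s\<in>S. Rg s \<noteq> {0}) \<and>
     (\<forall>x::'r. \<exists>!f::'s \<Rightarrow> 'r. (\<forall>s. s \<notin> S \<longrightarrow> f s = 0) \<and> finite {s. f s \<noteq> 0} \<and>
                   (\<forall>s\<in>S. f s \<in> Rg s) \<and> x = (\<Sum>s\<in>{s. f s \<noteq> 0}. f s)) \<and>
     (\<forall>s\<in>S. \<forall>t\<in>S. \<forall>u. m s t = Some u \<longrightarrow> (\<forall>a\<in>Rg s. \<forall>b\<in>Rg t. a * b \<in> Rg u)) \<and>
     (\<forall>s\<in>S. \<forall>t\<in>S. (\<exists>a\<in>Rg s. \<exists>b\<in>Rg t. a * b \<noteq> 0) \<longrightarrow> m s t \<noteq> None)"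

definition cancellative :: "'s set \<Rightarrow> ('s \<Rightarrow> 's \<Rightarrow> 's option) \<Rightarrow> bool" where
  "cancellative S m \<longleftrightarrow>
     (\<forall>s\<in>S. \<forall>t\<in>S. \<forall>u\<in>S. \<forall>v.
        (m s u = Some v \<and> m t u = Some v \<longrightarrow> s = t) \<and>
        (m u s = Some v \<and> m u t = Some v \<longrightarrow> s = t))"

definition idempotent_in :: "'s set \<Rightarrow> ('s \<Rightarrow> 's \<Rightarrow> 's option) \<Rightarrow> 's \<Rightarrow> bool" where
  "idempotent_in S m e \<longleftrightarrow> e \<in> S \<and> m e e = Some e"

definition graded_vNr :: "'s set \<Rightarrow> ('s \<Rightarrow> 'r::ring set) \<Rightarrow> bool" where
  "graded_vNr S Rg \<longleftrightarrow> (\<forall>s\<in>S. \<forall>x\<in>Rg s. \<exists>y::'r. x = x * y * x)"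

definition vNr_subring :: "'r::ring set \<Rightarrow> bool" where
  "vNr_subring A \<longleftrightarrow> (\<forall>x\<in>A. \<exists>y\<in>A. x = x * y * x)"

end

theory Submission
  imports Defs
begin

definition gdec :: "'s set \<Rightarrow> ('s \<Rightarrow> 'r::ring set) \<Rightarrow> 'r \<Rightarrow> ('s \<Rightarrow> 'r) \<Rightarrow> bool" where
  "gdec S Rg x f \<longleftrightarrow> (\<forall>s. s \<notin> S \<longrightarrow> f s = 0) \<and> finite {s. f s \<noteq> 0} \<and>
                   (\<forall>s\<in>S. f s \<in> Rg s) \<and> x = (\<Sum>s\<in>{s. f s \<noteq> 0}. f s)"

definition gproj :: "'s set \<Rightarrow> ('s \<Rightarrow> 'r::ring set) \<Rightarrow> 's \<Rightarrow> 'r \<Rightarrow> 'r" where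
  "gproj S Rg e z = (THE f. gdec S Rg z f) e"

lemma gdec_ex1:
  fixes S :: "'s set" and m :: "'s \<Rightarrow> 's \<Rightarrow> 's option" and Rg :: "'s \<Rightarrow> 'r::ring set"
  assumes "graded_ring_inducing S m Rg"
  shows "\<exists>!f. gdec S Rg x f"
proof -
  have "\<forall>x::'r. \<exists>!f::'s \<Rightarrow> 'r. (\<forall>s. s \<notin> S \<longrightarrow> f s = 0) \<and> finite {s. f s \<noteq> 0} \<and>
                   (\<forall>s\<in>S. f s \<in> Rg s) \<and> x = (\<Sum>s\<in>{s. f s \<noteq> 0}. f s)"
    using assms unfolding graded_ring_inducing_def by (elim conjE)
  then show ?thesis unfolding gdec_def by (rule spec)
qed

lemma gproj_eq:
  fixes m :: "'s \<Rightarrow> 's \<Rightarrow> 's option" and Rg :: "'s \<Rightarrow> 'r::ring set"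
  assumes "graded_ring_inducing S m Rg" "gdec S Rg x f"
  shows "gproj S Rg e x = f e"
proof -
  have "(THE f. gdec S Rg x f) = f"
    apply (rule the1_equality)
    using gdec_ex1[OF assms(1), of x] assms(2) by auto
  thus ?thesis unfolding gproj_def by simp
qed

lemma gdec_add:
  fixes m :: "'s \<Rightarrow> 's \<Rightarrow> 's option" and Rg :: "'s \<Rightarrow> 'r::ring set"
  assumes G: "graded_ring_inducing S m Rg" and a: "gdec S Rg a fa" and b: "gdec S Rg b fb"
  shows "gdec S Rg (a + b) (\<lambda>s. fa s + fb s)"
proof -
  let ?A = "{s. fa s \<noteq> 0}" and ?B = "{s. fb s \<noteq> 0}" and ?C = "{s. fa s + fb s \<noteq> 0}"
  have fA: "finite ?A" and fB: "finite ?B" using a b unfolding gdec_def by auto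
  have CU: "?C \<subseteq> ?A \<union> ?B" by auto
  have fU: "finite (?A \<union> ?B)" using fA fB by simp
  have fC: "finite ?C" using CU fU finite_subset by blast
  have "(\<Sum>s\<in>?C. fa s + fb s) = (\<Sum>s\<in>?A \<union> ?B. fa s + fb s)"
    by (rule sum.mono_neutral_left[OF fU CU]) auto
  also have "\<dots> = (\<Sum>s\<in>?A \<union> ?B. fa s) + (\<Sum>s\<in>?A \<union> ?B. fb s)" by (rule sum.distrib)
  also have "(\<Sum>s\<in>?A \<union> ?B. fa s) = (\<Sum>s\<in>?A. fa s)"
    by (rule sum.mono_neutral_right[OF fU]) auto
  also have "(\<Sum>s\<in>?A \<union> ?B. fb s) = (\<Sum>s\<in>?B. fb s)"
    by (rule sum.mono_neutral_right[OF fU]) auto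
  finally have sum: "(\<Sum>s\<in>?C. fa s + fb s) = a + b" using a b unfolding gdec_def by simp
  have "\<forall>s\<in>S. fa s + fb s \<in> Rg s"
  proof
    fix s assume sS: "s \<in> S"
    have "additive_subgroup (Rg s)" using G sS unfolding graded_ring_inducing_def by simp
    moreover have "fa s \<in> Rg s" "fb s \<in> Rg s" using a b sS unfolding gdec_def by simp_all
    ultimately show "fa s + fb s \<in> Rg s" unfolding additive_subgroup_def by simp
  qed
  moreover have "\<forall>s. s \<notin> S \<longrightarrow> fa s + fb s = 0" using a b unfolding gdec_def by simp
  ultimately show ?thesis using fC sum unfolding gdec_def by simp
qed

lemma gdec_hom:
  fixes m :: "'s \<Rightarrow> 's \<Rightarrow> 's option" and Rg :: "'s \<Rightarrow> 'r::ring set"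
  assumes G: "graded_ring_inducing S m Rg" and u: "u \<in> S" and z: "z \<in> Rg u"
  shows "gdec S Rg z (\<lambda>s. if s = u then z else 0)"
proof -
  have z0: "\<forall>s\<in>S. 0 \<in> Rg s" using G unfolding graded_ring_inducing_def additive_subgroup_def by auto
  have "{s. (if s = u then z else 0) \<noteq> 0} = (if z = 0 then {} else {u})" by auto
  then show ?thesis using u z z0 unfolding gdec_def by auto
qed

lemma gproj_add:
  fixes m :: "'s \<Rightarrow> 's \<Rightarrow> 's option" and Rg :: "'s \<Rightarrow> 'r::ring set"
  assumes G: "graded_ring_inducing S m Rg"
  shows "gproj S Rg e (a + b) = gproj S Rg e a + gproj S Rg e b"
proof -
  obtain fa where a: "gdec S Rg a fa" using gdec_ex1[OF G] by blast
  obtain fb where b: "gdec S Rg b fb" using gdec_ex1[OF G] by blast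
  show ?thesis using gproj_eq[OF G gdec_add[OF G a b]] gproj_eq[OF G a] gproj_eq[OF G b] by simp
qed

lemma gproj_zero:
  fixes m :: "'s \<Rightarrow> 's \<Rightarrow> 's option" and Rg :: "'s \<Rightarrow> 'r::ring set"
  assumes G: "graded_ring_inducing S m Rg"
  shows "gproj S Rg e 0 = 0"
  using gproj_add[OF G, of e 0 0] by simp

lemma gproj_sum:
  fixes m :: "'s \<Rightarrow> 's \<Rightarrow> 's option" and Rg :: "'s \<Rightarrow> 'r::ring set"
  assumes G: "graded_ring_inducing S m Rg" and F: "finite F"
  shows "gproj S Rg e (\<Sum>s\<in>F. g s) = (\<Sum>s\<in>F. gproj S Rg e (g s))"
  using F by (induction F rule: finite_induct) (auto simp: gproj_zero[OF G] gproj_add[OF G])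

theorem lemma4p3:
  fixes S :: "'s set" and m :: "'s \<Rightarrow> 's \<Rightarrow> 's option" and Rg :: "'s \<Rightarrow> 'r::ring set"
  assumes "graded_ring_inducing S m Rg"
    and "cancellative S m"
    and "graded_vNr S Rg"
  shows "\<forall>e. idempotent_in S m e \<longrightarrow> vNr_subring (Rg e)"
proof (intro allI impI)
  fix e assume ide: "idempotent_in S m e"
  have G: "graded_ring_inducing S m Rg" by fact
  have eS: "e \<in> S" and ee: "m e e = Some e" using ide unfolding idempotent_in_def by auto
  have pg: "partial_groupoid S m" and mul: "\<forall>s\<in>S. \<forall>t\<in>S. \<forall>u. m s t = Some u \<longrightarrow> (\<forall>a\<in>Rg s. \<forall>b\<in>Rg t. a * b \<in> Rg u)"
    and nz: "\<forall>s\<in>S. \<forall>t\<in>S. (\<exists>a\<in>Rg s. \<exists>b\<in>Rg t. a * b \<noteq> 0) \<longrightarrow> m s t \<noteq> None"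
    using G unfolding graded_ring_inducing_def by auto
  show "vNr_subring (Rg e)" unfolding vNr_subring_def
  proof
    fix x assume xe: "x \<in> Rg e"
    obtain y where xy: "x = x * y * x" using assms(3) xe eS unfolding graded_vNr_def by blast
    obtain f where fy: "gdec S Rg y f" using gdec_ex1[OF G] by blast
    let ?F = "insert e {s. f s \<noteq> 0}"
    have fF: "finite ?F" using fy unfolding gdec_def by auto
    have ysum: "y = (\<Sum>s\<in>?F. f s)"
    proof -
      have "y = (\<Sum>s\<in>{s. f s \<noteq> 0}. f s)" using fy unfolding gdec_def by simp
      also have "\<dots> = (\<Sum>s\<in>?F. f s)" by (rule sum.mono_neutral_left[OF fF]) auto
      finally show ?thesis .
    qed
    have xsum: "x = (\<Sum>s\<in>?F. x * f s * x)"
      using xy ysum by (simp add: sum_distrib_left sum_distrib_right)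
    have fe: "f e \<in> Rg e" using fy eS unfolding gdec_def by simp
    have hterm: "gproj S Rg e (x * f s * x) = (if s = e then x * f s * x else 0)" for s
    proof (cases "s \<in> S")
      case False
      then have "f s = 0" using fy unfolding gdec_def by simp
      then show ?thesis using False eS gproj_zero[OF G] by auto
    next
      case sS: True
      have fs: "f s \<in> Rg s" using fy sS unfolding gdec_def by simp
      show ?thesis
      proof (cases "m e s")
        case None
        then have "x * f s = 0" using nz eS sS xe fs by (metis option.distinct(1))
        then show ?thesis using gproj_zero[OF G] None ee by auto
      next
        case (Some t)
        have tS: "t \<in> S" using pg Some eS sS unfolding partial_groupoid_def by blast
        have xt: "x * f s \<in> Rg t" using mul eS sS Some xe fs by metis
        show ?thesis
        proof (cases "m t e")
          case None
          then have "x * f s * x = 0" using nz tS eS xt xe by (metis option.distinct(1))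
          then show ?thesis using gproj_zero[OF G] by auto
        next
          case (Some u)
          have uS: "u \<in> S" using pg Some eS tS unfolding partial_groupoid_def by blast
          have xu: "x * f s * x \<in> Rg u" using mul tS eS Some xe xt by metis
          show ?thesis
          proof (cases "u = e")
            case True
            have "t = e" using assms(2) tS eS Some ee True unfolding cancellative_def by (metis)
            then have "s = e" using assms(2) sS eS \<open>m e s = Some t\<close> ee unfolding cancellative_def by (metis)
            then show ?thesis using gproj_eq[OF G gdec_hom[OF G eS, of "x * f s * x"]] xu True by simp
          next
            case False
            have "s \<noteq> e" using Some \<open>m e s = Some t\<close> ee False by auto
            then show ?thesis using False gproj_eq[OF G gdec_hom[OF G uS xu], of e] by simp
          qed
        qed
      qed
    qed
    have "x = gproj S Rg e x" using gproj_eq[OF G gdec_hom[OF G eS xe]] by simp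
    also have "\<dots> = (\<Sum>s\<in>?F. gproj S Rg e (x * f s * x))"
      by (subst xsum) (rule gproj_sum[OF G fF])
    also have "\<dots> = x * f e * x" using fF by (simp add: hterm sum.delta)
    finally show "\<exists>y\<in>Rg e. x = x * y * x" using fe by blast
  qed
qed

end
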